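(* Let $T$ be a tree on $n$ vertices, with vertex set $\{1,\dots,n\}$ and distance matrix $D$, and let $1$ be a fixed vertex. Let $R(T)=2(n-1)\mathbf{1}^\top D e_1-\mathbf{1}^\top D\mathbf{1}$. Then $$R(T)=4\sum_{1\le a<b\le n} d_{1,P_{a,b}}$$ and $$0\le R(T)\le \tfrac{2}{3}n(n-1)(n-2).$$ The upper bound is achieved if and only if $T$ is the path $P_n$ and vertex $1$ is one of its end vertices; the lower bound is achieved if and only if $T$ is a star and vertex $1$ is its centre.
   Context: $\mathbf{1}$ is the all-ones vector and $e_1$ the first standard basis vector (corresponding to vertex $1$), so $\mathbf{1}^\top De_1=\sum_u d_{u,1}$. $P_{a,b}$ is the unique path in $T$ between $a$ and $b$, and $d_{1,P_{a,b}}$ is the distance from vertex $1$ to the vertex of $P_{a,b}$ closest to it. *)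

theory Defs
  imports Complex_Main
begin

definition is_walk :: "(nat \<Rightarrow> nat \<Rightarrow> bool) \<Rightarrow> nat list \<Rightarrow> bool" where
  "is_walk E xs \<longleftrightarrow> xs \<noteq> [] \<and> (\<forall>i. Suc i < length xs \<longrightarrow> E (xs ! i) (xs ! Suc i))"

definition is_path :: "(nat \<Rightarrow> nat \<Rightarrow> bool) \<Rightarrow> nat list \<Rightarrow> nat \<Rightarrow> nat \<Rightarrow> bool" where
  "is_path E xs a b \<longleftrightarrow> is_walk E xs \<and> distinct xs \<and> hd xs = a \<and> last xs = b"

definition edges :: "(nat \<Rightarrow> nat \<Rightarrow> bool) \<Rightarrow> nat set set" where
  "edges E = {{u, v} | u v. E u v}"

definition is_tree :: "nat \<Rightarrow> (nat \<Rightarrow> nat \<Rightarrow> bool) \<Rightarrow> bool" where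
  "is_tree n E \<longleftrightarrow> n \<ge> 1
     \<and> (\<forall>u v. E u v \<longrightarrow> u \<in> {1..n} \<and> v \<in> {1..n})
     \<and> (\<forall>u v. E u v \<longrightarrow> E v u)
     \<and> (\<forall>u. \<not> E u u)
     \<and> (\<forall>u\<in>{1..n}. \<forall>v\<in>{1..n}. \<exists>xs. is_walk E xs \<and> hd xs = u \<and> last xs = v)
     \<and> card (edges E) = n - 1"

definition gdist :: "(nat \<Rightarrow> nat \<Rightarrow> bool) \<Rightarrow> nat \<Rightarrow> nat \<Rightarrow> nat" where
  "gdist E u v = (LEAST k. \<exists>xs. is_walk E xs \<and> hd xs = u \<and> last xs = v \<and> length xs = Suc k)"

text \<open>Vertex set of the unique path P_{a,b} between a and b in a tree.\<close>
definition path_verts :: "(nat \<Rightarrow> nat \<Rightarrow> bool) \<Rightarrow> nat \<Rightarrow> nat \<Rightarrow> nat set" where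
  "path_verts E a b = set (THE xs. is_path E xs a b)"

definition dist_to_path :: "(nat \<Rightarrow> nat \<Rightarrow> bool) \<Rightarrow> nat \<Rightarrow> nat \<Rightarrow> nat \<Rightarrow> nat" where
  "dist_to_path E w a b = Min ((\<lambda>v. gdist E w v) ` path_verts E a b)"

definition R_index :: "nat \<Rightarrow> (nat \<Rightarrow> nat \<Rightarrow> bool) \<Rightarrow> real" where
  "R_index n E = 2 * (real n - 1) * (\<Sum>u\<in>{1..n}. real (gdist E u 1))
      - (\<Sum>u\<in>{1..n}. \<Sum>v\<in>{1..n}. real (gdist E u v))"

definition is_path_graph_end1 :: "nat \<Rightarrow> (nat \<Rightarrow> nat \<Rightarrow> bool) \<Rightarrow> bool" where
  "is_path_graph_end1 n E \<longleftrightarrow> (\<exists>xs. distinct xs \<and> set xs = {1..n} \<and> hd xs = 1 \<and>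
     (\<forall>u v. E u v \<longleftrightarrow> (\<exists>i. Suc i < length xs \<and>
         ((u = xs ! i \<and> v = xs ! Suc i) \<or> (v = xs ! i \<and> u = xs ! Suc i)))))"

definition is_star_centre1 :: "nat \<Rightarrow> (nat \<Rightarrow> nat \<Rightarrow> bool) \<Rightarrow> bool" where
  "is_star_centre1 n E \<longleftrightarrow> (\<forall>u v. E u v \<longleftrightarrow>
     ((u = 1 \<and> v \<in> {1..n} - {1}) \<or> (v = 1 \<and> u \<in> {1..n} - {1})))"

end

theory Submission imports Defs begin

lemma walk_Cons2: "is_walk E (x # y # ys) \<longleftrightarrow> E x y \<and> is_walk E (y # ys)"
  unfolding is_walk_def
  by (auto simp: nth_Cons split: nat.splits)

lemma walk_single[simp]: "is_walk E [x]"
  by (simp add: is_walk_def)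

lemma walk_append1:
  assumes "is_walk E xs" "E (last xs) v"
  shows "is_walk E (xs @ [v])"
  using assms unfolding is_walk_def
  apply (auto simp: nth_append last_conv_nth less_Suc_eq)
  subgoal for i by (subgoal_tac "i = length xs - Suc 0") simp_all
  done

lemma walk_take:
  assumes "is_walk E xs" "0 < k"
  shows "is_walk E (take k xs)"
  using assms unfolding is_walk_def by auto

lemma walk_edge:
  assumes "is_walk E xs" "Suc i < length xs"
  shows "E (xs ! i) (xs ! Suc i)"
  using assms unfolding is_walk_def by auto

lemma discrete_ivt:
  assumes "\<not> P i" "P j" "i < j"
  shows "\<exists>k. i \<le> k \<and> k < j \<and> \<not> P k \<and> P (Suc k)"
  using assms
proof (induction j)
  case 0 then show ?case by simp
next
  case (Suc j)
  show ?case
  proof (cases "P j")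
    case True
    then have "i < j" using Suc.prems by (metis less_SucE)
    then show ?thesis using Suc.IH[OF Suc.prems(1) True] by (metis less_SucI)
  next
    case False
    then show ?thesis using Suc.prems by (intro exI[of _ j]) auto
  qed
qed

definition sdiff :: "'a set \<Rightarrow> 'a set \<Rightarrow> 'a set" where
  "sdiff X Y = (X - Y) \<union> (Y - X)"

lemma card_sdiff_tri:
  assumes "finite X" "finite Y" "finite Z"
  shows "card (sdiff X Z) \<le> card (sdiff X Y) + card (sdiff Y Z)"
proof -
  have "sdiff X Z \<subseteq> sdiff X Y \<union> sdiff Y Z" unfolding sdiff_def by auto
  then have "card (sdiff X Z) \<le> card (sdiff X Y \<union> sdiff Y Z)"
    by (rule card_mono[rotated]) (use assms in \<open>auto simp: sdiff_def\<close>)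
  also have "\<dots> \<le> card (sdiff X Y) + card (sdiff Y Z)" by (rule card_Un_le)
  finally show ?thesis .
qed

lemma card_sdiff_eq:
  assumes "finite X" "finite Y"
  shows "card (sdiff X Y) + 2 * card (X \<inter> Y) = card X + card Y"
proof -
  have "card (sdiff X Y) = card (X - Y) + card (Y - X)"
    unfolding sdiff_def by (rule card_Un_disjoint) (use assms in auto)
  moreover have "card (X - Y) + card (X \<inter> Y) = card X"
    using assms by (metis Diff_Diff_Int card_Diff_subset_Int Int_lower1 card_mono finite_Int le_add_diff_inverse2 Int_commute)
  moreover have "card (Y - X) + card (X \<inter> Y) = card Y"
    using assms by (metis Diff_Diff_Int card_Diff_subset_Int Int_lower1 card_mono finite_Int le_add_diff_inverse2 Int_commute)
  ultimately show ?thesis by linarith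
qed

locale tr =
  fixes n :: nat and E :: "nat \<Rightarrow> nat \<Rightarrow> bool"
  assumes tree: "is_tree n E"
begin

lemma n_ge1: "n \<ge> 1" using tree unfolding is_tree_def by auto
lemma E_V: "E u v \<Longrightarrow> u \<in> {1..n} \<and> v \<in> {1..n}" using tree unfolding is_tree_def by blast
lemma E_sym: "E u v \<Longrightarrow> E v u" using tree unfolding is_tree_def by blast
lemma E_irr: "\<not> E u u" using tree unfolding is_tree_def by blast
lemma conn: "u \<in> {1..n} \<Longrightarrow> v \<in> {1..n} \<Longrightarrow> \<exists>xs. is_walk E xs \<and> hd xs = u \<and> last xs = v"
  using tree unfolding is_tree_def by blast
lemma card_edges: "card (edges E) = n - 1" using tree unfolding is_tree_def by blast

lemma one_V: "1 \<in> {1..n}" using n_ge1 by auto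

lemma gdist_le:
  assumes "is_walk E xs" "hd xs = u" "last xs = v"
  shows "gdist E u v \<le> length xs - 1"
proof -
  have "xs \<noteq> []" using assms(1) by (simp add: is_walk_def)
  then have "length xs = Suc (length xs - 1)" by simp
  then show ?thesis unfolding gdist_def using assms by (metis (mono_tags, lifting) Least_le)
qed

lemma gdist_ex:
  assumes "u \<in> {1..n}" "v \<in> {1..n}"
  shows "\<exists>xs. is_walk E xs \<and> hd xs = u \<and> last xs = v \<and> length xs = Suc (gdist E u v)"
proof -
  obtain xs where xs: "is_walk E xs" "hd xs = u" "last xs = v" using conn[OF assms] by blast
  have "xs \<noteq> []" using xs(1) by (simp add: is_walk_def)
  then have "\<exists>k xs. is_walk E xs \<and> hd xs = u \<and> last xs = v \<and> length xs = Suc k"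
    using xs by (metis Suc_pred length_greater_0_conv)
  then show ?thesis unfolding gdist_def by (rule LeastI_ex)
qed

definition h :: "nat \<Rightarrow> nat" where "h v = gdist E 1 v"

lemma h_one: "h 1 = 0"
  using gdist_le[of "[1]" 1 1] by (simp add: h_def)

lemma h_zero: assumes "v \<in> {1..n}" "h v = 0" shows "v = 1"
proof -
  obtain xs where "is_walk E xs" "hd xs = 1" "last xs = v" "length xs = Suc 0"
    using gdist_ex[OF one_V assms(1)] assms(2) by (auto simp: h_def)
  then show ?thesis by (cases xs) auto
qed

lemma parent_ex:
  assumes "v \<in> {1..n}" "v \<noteq> 1"
  shows "\<exists>w. E v w \<and> Suc (h w) = h v"
proof -
  obtain xs where xs: "is_walk E xs" "hd xs = 1" "last xs = v" "length xs = Suc (h v)"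
    using gdist_ex[OF one_V assms(1)] by (auto simp: h_def)
  have hv: "h v \<noteq> 0" using h_zero assms by blast
  have ne: "xs \<noteq> []" using xs(4) by auto
  define w where "w = xs ! (h v - 1)"
  have "E (xs ! (h v - 1)) (xs ! Suc (h v - 1))" using walk_edge[OF xs(1), of "h v - 1"] xs(4) hv by simp
  moreover have "xs ! h v = v" using xs(3,4) last_conv_nth[OF ne] by simp
  ultimately have Ewv: "E w v" unfolding w_def using hv by simp
  define ys where "ys = take (h v) xs"
  have ys1: "is_walk E ys" unfolding ys_def using walk_take[OF xs(1)] hv by simp
  have ys2: "length ys = h v" unfolding ys_def using xs(4) by simp
  have ysne: "ys \<noteq> []" using ys2 hv by auto
  have ys3: "hd ys = 1" using xs(2) hv ne ysne unfolding ys_def by (simp add: hd_conv_nth)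
  have ys4: "last ys = w" using ysne ys2 hv unfolding w_def by (simp add: last_conv_nth ys_def)
  have "gdist E 1 w \<le> length ys - 1" using gdist_le[OF ys1 ys3 ys4] .
  then have hw1: "h w \<le> h v - 1" using ys2 by (simp add: h_def)
  have wV: "w \<in> {1..n}" using E_V[OF Ewv] by blast
  obtain zs where zs: "is_walk E zs" "hd zs = 1" "last zs = w" "length zs = Suc (h w)"
    using gdist_ex[OF one_V wV] by (auto simp: h_def)
  have zs1: "is_walk E (zs @ [v])" using walk_append1 zs Ewv by simp
  have zs2: "hd (zs @ [v]) = 1" using zs by (cases zs) auto
  have "gdist E 1 v \<le> length (zs @ [v]) - 1" using gdist_le[OF zs1 zs2] by simp
  then have "h v \<le> Suc (h w)" using zs(4) by (simp add: h_def)
  then show ?thesis using hv hw1 Ewv E_sym by (intro exI[of _ w]) auto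
qed

definition p :: "nat \<Rightarrow> nat" where "p v = (SOME w. E v w \<and> Suc (h w) = h v)"

lemma p_prop: assumes "v \<in> {1..n}" "v \<noteq> 1" shows "E v (p v)" "Suc (h (p v)) = h v"
  using someI_ex[OF parent_ex[OF assms]] unfolding p_def by auto

lemma p_V: assumes "v \<in> {1..n}" "v \<noteq> 1" shows "p v \<in> {1..n}"
  using E_V[OF p_prop(1)[OF assms]] by blast

lemma edges_fin: "finite (edges E)"
proof -
  have "edges E \<subseteq> Pow {1..n}" unfolding edges_def using E_V by auto
  then show ?thesis by (meson finite_Pow_iff finite_atLeastAtMost finite_subset)
qed

lemma edge_char:
  assumes "E u v"
  shows "(u \<noteq> 1 \<and> u \<in> {1..n} \<and> v = p u) \<or> (v \<noteq> 1 \<and> v \<in> {1..n} \<and> u = p v)"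
proof -
  let ?f = "\<lambda>v. {v, p v}"
  let ?W = "{1..n} - {1}"
  have inj: "inj_on ?f ?W"
  proof (rule inj_onI)
    fix x y assume x: "x \<in> ?W" and y: "y \<in> ?W" and eq: "?f x = ?f y"
    show "x = y"
    proof (rule ccontr)
      assume "x \<noteq> y"
      then have "x = p y" "y = p x" using eq by (auto simp: doubleton_eq_iff)
      then show False using p_prop(2)[of x] p_prop(2)[of y] x y by auto
    qed
  qed
  have sub: "?f ` ?W \<subseteq> edges E" unfolding edges_def using p_prop(1) by blast
  have "card (?f ` ?W) = n - 1" using card_image[OF inj] n_ge1 by simp
  then have eq: "?f ` ?W = edges E" using card_subset_eq[OF edges_fin sub] card_edges by simp
  have "{u, v} \<in> ?f ` ?W" using assms eq unfolding edges_def by blast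
  then obtain w where w: "w \<in> ?W" "{u, v} = {w, p w}" by blast
  then show ?thesis by (auto simp: doubleton_eq_iff)
qed

definition A :: "nat \<Rightarrow> nat set" where "A v = (\<lambda>k. (p ^^ k) v) ` {..h v}"

lemma iter:
  assumes "v \<in> {1..n}" "k \<le> h v"
  shows "(p ^^ k) v \<in> {1..n} \<and> h ((p ^^ k) v) = h v - k"
  using assms(2)
proof (induction k)
  case 0 then show ?case using assms(1) by simp
next
  case (Suc k)
  then have IH: "(p ^^ k) v \<in> {1..n}" "h ((p ^^ k) v) = h v - k" by auto
  have ne: "(p ^^ k) v \<noteq> 1" using IH(2) Suc.prems h_one by auto
  show ?case using p_prop(2)[OF IH(1) ne] p_V[OF IH(1) ne] IH(2) by simp
qed

lemma A_fin: "finite (A v)" unfolding A_def by simp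

lemma A_self: "v \<in> A v" unfolding A_def by (rule image_eqI[of _ _ 0]) auto

lemma A_V: assumes "v \<in> {1..n}" shows "A v \<subseteq> {1..n}"
  unfolding A_def using iter[OF assms] by auto

lemma A_h:
  assumes "v \<in> {1..n}" "w \<in> A v"
  shows "h w \<le> h v" "h w = h v \<Longrightarrow> w = v"
proof -
  obtain k where k: "k \<le> h v" "w = (p ^^ k) v" using assms(2) unfolding A_def by auto
  show "h w \<le> h v" using iter[OF assms(1) k(1)] k by simp
  show "h w = h v \<Longrightarrow> w = v" using iter[OF assms(1) k(1)] k by (cases k) auto
qed

lemma one_in_A: assumes "v \<in> {1..n}" shows "1 \<in> A v"
proof -
  have "h ((p ^^ h v) v) = 0" "(p ^^ h v) v \<in> {1..n}" using iter[OF assms, of "h v"] by auto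
  then have "(p ^^ h v) v = 1" using h_zero by blast
  then show ?thesis unfolding A_def by (intro image_eqI[of _ _ "h v"]) auto
qed

lemma A_one: "A 1 = {1}" unfolding A_def h_one by simp

lemma A_p:
  assumes "v \<in> {1..n}" "v \<noteq> 1"
  shows "A v = insert v (A (p v))"
proof -
  have hv: "h v = Suc (h (p v))" using p_prop(2)[OF assms] by simp
  have "{..h v} = insert 0 (Suc ` {..h (p v)})" unfolding hv by (rule atMost_Suc_eq_insert_0)
  then show ?thesis unfolding A_def by (simp only: image_insert image_image funpow_Suc_right comp_apply funpow_0)
qed

lemma A_trans:
  assumes "v \<in> {1..n}" "w \<in> A v"
  shows "A w \<subseteq> A v"
proof
  fix x assume "x \<in> A w"
  obtain k where k: "k \<le> h v" "w = (p ^^ k) v" using assms(2) unfolding A_def by auto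
  obtain j where j: "j \<le> h w" "x = (p ^^ j) w" using \<open>x \<in> A w\<close> unfolding A_def by auto
  have "h w = h v - k" using iter[OF assms(1) k(1)] k by simp
  then have "j + k \<le> h v" using j k by simp
  moreover have "x = (p ^^ (j + k)) v" using j k by (simp add: funpow_add)
  ultimately show "x \<in> A v" unfolding A_def by auto
qed

lemma A_uniq:
  assumes "v \<in> {1..n}" "x \<in> A v" "y \<in> A v" "h x = h y"
  shows "x = y"
proof -
  obtain k where k: "k \<le> h v" "x = (p ^^ k) v" using assms(2) unfolding A_def by auto
  obtain j where j: "j \<le> h v" "y = (p ^^ j) v" using assms(3) unfolding A_def by auto
  have "h v - k = h v - j" using iter[OF assms(1) k(1)] iter[OF assms(1) j(1)] k j assms(4) by simp
  then have "k = j" using k j by simp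
  then show ?thesis using k j by simp
qed

lemma A_ex:
  assumes "v \<in> {1..n}" "d \<le> h v"
  shows "\<exists>w\<in>A v. h w = d"
proof -
  have "(p ^^ (h v - d)) v \<in> A v" unfolding A_def by auto
  moreover have "h ((p ^^ (h v - d)) v) = d" using iter[OF assms(1), of "h v - d"] assms(2) by simp
  ultimately show ?thesis by blast
qed

lemma card_A: assumes "v \<in> {1..n}" shows "card (A v) = Suc (h v)"
proof -
  have "inj_on (\<lambda>k. (p ^^ k) v) {..h v}"
  proof (rule inj_onI)
    fix i j assume "i \<in> {..h v}" "j \<in> {..h v}" "(p ^^ i) v = (p ^^ j) v"
    then show "i = j" using iter[OF assms, of i] iter[OF assms, of j] by auto
  qed
  then show ?thesis unfolding A_def by (simp add: card_image)
qed

lemma p_notin: assumes "v \<in> {1..n}" "v \<noteq> 1" shows "v \<notin> A (p v)"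
  using A_h(1)[OF p_V[OF assms]] p_prop(2)[OF assms] by force

lemma A_inj: assumes "u \<in> {1..n}" "v \<in> {1..n}" "A u = A v" shows "u = v"
proof -
  have "h u \<le> h v" using A_h(1)[OF assms(2)] A_self[of u] assms(3) by simp
  moreover have "h v \<le> h u" using A_h(1)[OF assms(1)] A_self[of v] assms(3) by simp
  ultimately show ?thesis using A_h(2)[OF assms(2)] A_self[of u] assms(3) by simp
qed

lemma A_mem_h: assumes "v \<in> {1..n}" "w \<in> A v" "w \<noteq> v" shows "h w < h v"
proof -
  have "h w \<le> h v" "h w \<noteq> h v" using A_h[OF assms(1,2)] assms(3) by auto
  then show ?thesis by simp
qed

end

context tr
begin

lemma sdiff_self[simp]: "sdiff X X = {}" by (auto simp: sdiff_def)

lemma sdiff_empty: "sdiff X Y = {} \<Longrightarrow> X = Y" by (auto simp: sdiff_def)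

lemma sdiff_fin: "finite (sdiff (A x) (A y))" by (simp add: sdiff_def A_fin)

lemma edge_sd:
  assumes "E x y"
  shows "card (sdiff (A x) (A y)) = 1"
  using edge_char[OF assms]
proof
  assume a: "x \<noteq> 1 \<and> x \<in> {1..n} \<and> y = p x"
  then have "A x = insert x (A y)" "x \<notin> A y" using A_p p_notin by auto
  then have "sdiff (A x) (A y) = {x}" by (auto simp: sdiff_def)
  then show ?thesis by simp
next
  assume a: "y \<noteq> 1 \<and> y \<in> {1..n} \<and> x = p y"
  then have "A y = insert y (A x)" "y \<notin> A x" using A_p p_notin by auto
  then have "sdiff (A x) (A y) = {y}" by (auto simp: sdiff_def)
  then show ?thesis by simp
qed

lemma walk_lb:
  assumes "is_walk E xs"
  shows "Suc (card (sdiff (A (hd xs)) (A (last xs)))) \<le> length xs"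
  using assms
proof (induction xs)
  case Nil then show ?case by (simp add: is_walk_def)
next
  case (Cons x ys)
  show ?case
  proof (cases ys)
    case Nil then show ?thesis by simp
  next
    case (Cons y zs)
    have e: "E x y" and w: "is_walk E ys" using Cons.prems \<open>ys = y # zs\<close> walk_Cons2 by auto
    have IH: "Suc (card (sdiff (A y) (A (last ys)))) \<le> length ys" using Cons.IH[OF w] \<open>ys = y # zs\<close> by simp
    have "card (sdiff (A x) (A (last ys))) \<le> card (sdiff (A x) (A y)) + card (sdiff (A y) (A (last ys)))"
      by (rule card_sdiff_tri) (simp_all add: A_fin)
    then show ?thesis using IH edge_sd[OF e] \<open>ys = y # zs\<close> by simp
  qed
qed

lemma step:
  assumes "u \<in> {1..n}" "b \<in> {1..n}" "u \<noteq> b"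
  shows "\<exists>u'. E u u' \<and> u' \<in> {1..n} \<and> Suc (card (sdiff (A u') (A b))) = card (sdiff (A u) (A b))"
proof (cases "u \<in> A b")
  case False
  then have u1: "u \<noteq> 1" using one_in_A[OF assms(2)] by auto
  have Au: "A u = insert u (A (p u))" "u \<notin> A (p u)" using A_p[OF assms(1) u1] p_notin[OF assms(1) u1] by auto
  have "sdiff (A u) (A b) = insert u (sdiff (A (p u)) (A b))" "u \<notin> sdiff (A (p u)) (A b)"
    using Au False by (auto simp: sdiff_def)
  then have "card (sdiff (A u) (A b)) = Suc (card (sdiff (A (p u)) (A b)))" using sdiff_fin by simp
  then show ?thesis using p_prop(1)[OF assms(1) u1] p_V[OF assms(1) u1] by auto
next
  case True
  have lt: "h u < h b" using A_mem_h[OF assms(2) True assms(3)] .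
  obtain u' where u': "u' \<in> A b" "h u' = Suc (h u)" using A_ex[OF assms(2), of "Suc (h u)"] lt by auto
  have u'V: "u' \<in> {1..n}" using A_V[OF assms(2)] u'(1) by auto
  have u'1: "u' \<noteq> 1" using u'(2) h_one by auto
  have "p u' \<in> A u'" using A_p[OF u'V u'1] A_self by auto
  then have "p u' \<in> A b" using A_trans[OF assms(2) u'(1)] by auto
  moreover have "h (p u') = h u" using p_prop(2)[OF u'V u'1] u'(2) by simp
  ultimately have pu: "p u' = u" using A_uniq[OF assms(2) _ True] by blast
  have e: "E u u'" using E_sym p_prop(1)[OF u'V u'1] pu by auto
  have sub: "A u \<subseteq> A b" using A_trans[OF assms(2) True] .
  have Au': "A u' = insert u' (A u)" "u' \<notin> A u" using A_p[OF u'V u'1] p_notin[OF u'V u'1] pu by auto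
  have s1: "sdiff (A u) (A b) = A b - A u" using sub by (auto simp: sdiff_def)
  have s2: "sdiff (A u') (A b) = (A b - A u) - {u'}" using sub Au' u'(1) by (auto simp: sdiff_def)
  have "card ((A b - A u) - {u'}) = card (A b - A u) - 1" using u'(1) Au'(2) A_fin by (simp add: card_Diff_singleton)
  moreover have "card (A b - A u) > 0" using u'(1) Au'(2) A_fin by (metis DiffI card_gt_0_iff emptyE finite_Diff)
  ultimately have "Suc (card (sdiff (A u') (A b))) = card (sdiff (A u) (A b))" using s1 s2 by simp
  then show ?thesis using e u'V by auto
qed

lemma path_ex_aux:
  assumes "b \<in> {1..n}"
  shows "\<forall>u\<in>{1..n}. card (sdiff (A u) (A b)) = k \<longrightarrow> (\<exists>xs. is_walk E xs \<and> hd xs = u \<and> last xs = b \<and>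
     length xs = Suc k \<and> distinct xs \<and> (\<forall>w\<in>set xs. card (sdiff (A w) (A b)) \<le> k))"
proof (induction k)
  case 0
  show ?case
  proof (intro ballI impI)
    fix u assume u: "u \<in> {1..n}" "card (sdiff (A u) (A b)) = 0"
    then have "A u = A b" using sdiff_fin sdiff_empty by (metis card_0_eq)
    then have "u = b" using A_inj u(1) assms by blast
    then show "\<exists>xs. is_walk E xs \<and> hd xs = u \<and> last xs = b \<and> length xs = Suc 0 \<and> distinct xs \<and> (\<forall>w\<in>set xs. card (sdiff (A w) (A b)) \<le> 0)"
      by (intro exI[of _ "[b]"]) simp
  qed
next
  case (Suc k)
  show ?case
  proof (intro ballI impI)
    fix u assume u: "u \<in> {1..n}" "card (sdiff (A u) (A b)) = Suc k"
    then have "u \<noteq> b" by auto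
    then obtain u' where u': "E u u'" "u' \<in> {1..n}" "Suc (card (sdiff (A u') (A b))) = card (sdiff (A u) (A b))"
      using step[OF u(1) assms] by blast
    obtain xs where xs: "is_walk E xs" "hd xs = u'" "last xs = b" "length xs = Suc k" "distinct xs"
      "\<forall>w\<in>set xs. card (sdiff (A w) (A b)) \<le> k"
      using Suc.IH u'(2) u'(3) u(2) by auto
    obtain y ys where xsc: "xs = y # ys" using xs(4) by (cases xs) auto
    have "is_walk E (u # xs)" using xs(1,2) u'(1) xsc walk_Cons2 by auto
    moreover have "u \<notin> set xs" using xs(6) u(2) by fastforce
    ultimately show "\<exists>xs. is_walk E xs \<and> hd xs = u \<and> last xs = b \<and> length xs = Suc (Suc k) \<and> distinct xs \<and> (\<forall>w\<in>set xs. card (sdiff (A w) (A b)) \<le> Suc k)"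
      using xs xsc u(2) by (intro exI[of _ "u # xs"]) auto
  qed
qed

lemma path_ex:
  assumes "u \<in> {1..n}" "b \<in> {1..n}"
  shows "\<exists>xs. is_walk E xs \<and> hd xs = u \<and> last xs = b \<and> length xs = Suc (card (sdiff (A u) (A b))) \<and> distinct xs"
  using path_ex_aux[OF assms(2)] assms(1) by blast

lemma gdist_A:
  assumes "u \<in> {1..n}" "v \<in> {1..n}"
  shows "gdist E u v = card (sdiff (A u) (A v))"
proof (rule antisym)
  obtain xs where "is_walk E xs" "hd xs = u" "last xs = v" "length xs = Suc (card (sdiff (A u) (A v)))"
    using path_ex[OF assms] by blast
  then show "gdist E u v \<le> card (sdiff (A u) (A v))" using gdist_le by fastforce
next
  obtain xs where "is_walk E xs" "hd xs = u" "last xs = v" "length xs = Suc (gdist E u v)"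
    using gdist_ex[OF assms] by blast
  then show "card (sdiff (A u) (A v)) \<le> gdist E u v" using walk_lb by fastforce
qed

lemma cut_in:
  assumes "E x y" "c \<notin> A x" "c \<in> A y"
  shows "y = c"
  using edge_char[OF assms(1)]
proof
  assume a: "x \<noteq> 1 \<and> x \<in> {1..n} \<and> y = p x"
  then have "A x = insert x (A y)" using A_p by auto
  then show ?thesis using assms by auto
next
  assume a: "y \<noteq> 1 \<and> y \<in> {1..n} \<and> x = p y"
  then have "A y = insert y (A x)" using A_p by auto
  then show ?thesis using assms by auto
qed

lemma cut_out:
  assumes "E x y" "c \<in> A x" "c \<notin> A y"
  shows "x = c \<and> y = p c"
proof -
  have xc: "x = c" using cut_in[OF E_sym[OF assms(1)] assms(3) assms(2)] .
  show ?thesis using edge_char[OF assms(1)]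
  proof
    assume a: "x \<noteq> 1 \<and> x \<in> {1..n} \<and> y = p x"
    then show ?thesis using xc by auto
  next
    assume a: "y \<noteq> 1 \<and> y \<in> {1..n} \<and> x = p y"
    then have "A y = insert y (A x)" using A_p by auto
    then show ?thesis using assms by auto
  qed
qed

lemma walk_enter:
  assumes "is_walk E xs" "j < length xs" "i < j" "c \<notin> A (xs ! i)" "c \<in> A (xs ! j)"
  shows "\<exists>k. i \<le> k \<and> k < j \<and> xs ! Suc k = c"
proof -
  obtain k where k: "i \<le> k" "k < j" "c \<notin> A (xs ! k)" "c \<in> A (xs ! Suc k)"
    using discrete_ivt[of "\<lambda>k. c \<in> A (xs ! k)", OF assms(4) assms(5) assms(3)] by blast
  have "E (xs ! k) (xs ! Suc k)" using walk_edge[OF assms(1)] k(2) assms(2) by simp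
  then show ?thesis using cut_in k by blast
qed

lemma walk_exit:
  assumes "is_walk E xs" "j < length xs" "i < j" "c \<in> A (xs ! i)" "c \<notin> A (xs ! j)"
  shows "\<exists>k. i \<le> k \<and> k < j \<and> xs ! k = c \<and> xs ! Suc k = p c"
proof -
  obtain k where k: "i \<le> k" "k < j" "c \<in> A (xs ! k)" "c \<notin> A (xs ! Suc k)"
    using discrete_ivt[of "\<lambda>k. c \<notin> A (xs ! k)", OF _ assms(5) assms(3)] assms(4) by blast
  have "E (xs ! k) (xs ! Suc k)" using walk_edge[OF assms(1)] k(2) assms(2) by simp
  then show ?thesis using cut_out k by blast
qed

end

context tr
begin

lemma walk_V:
  assumes "is_walk E xs" "hd xs \<in> {1..n}"
  shows "set xs \<subseteq> {1..n}"
proof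
  fix v assume "v \<in> set xs"
  then obtain i where i: "i < length xs" "xs ! i = v" by (auto simp: in_set_conv_nth)
  show "v \<in> {1..n}"
  proof (cases i)
    case 0 then show ?thesis using i assms by (simp add: hd_conv_nth is_walk_def)
  next
    case (Suc j)
    then have "E (xs ! j) (xs ! i)" using walk_edge[OF assms(1), of j] i by simp
    then show ?thesis using E_V i by blast
  qed
qed

lemma distinct_hd_last:
  assumes "distinct xs" "xs \<noteq> []" "hd xs = last xs"
  shows "xs = [hd xs]"
proof -
  have "xs ! 0 = xs ! (length xs - 1)" using assms by (simp add: hd_conv_nth last_conv_nth)
  then have "0 = length xs - 1" using assms nth_eq_iff_index_eq by (metis diff_less length_greater_0_conv zero_less_one)
  then show ?thesis using assms by (cases xs) auto
qed

lemma path_next: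
  assumes w: "is_walk E (a # x # rest)" and d: "distinct (a # x # rest)" and l: "last (x # rest) = b"
    and aV: "a \<in> {1..n}" and bV: "b \<in> {1..n}"
  shows "(a \<in> A b \<longrightarrow> x \<in> A b \<and> h x = Suc (h a)) \<and> (a \<notin> A b \<longrightarrow> x = p a)"
proof -
  let ?ys = "x # rest"
  let ?j = "length ?ys - 1"
  have e: "E a x" and wy: "is_walk E ?ys" using w walk_Cons2 by auto
  have ana: "a \<notin> set ?ys" using d by simp
  have yj: "?ys ! ?j = b" using l last_conv_nth[of "x # rest"] by simp
  have jl: "?j < length ?ys" by simp
  show ?thesis using edge_char[OF e]
  proof
    assume a: "a \<noteq> 1 \<and> a \<in> {1..n} \<and> x = p a"
    have "a \<notin> A b"
    proof
      assume ab: "a \<in> A b"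
      have ax: "a \<notin> A (?ys ! 0)" using p_notin a by simp
      show False
      proof (cases "?j = 0")
        case True then show False using ax yj ab by simp
      next
        case False
        then obtain k where "?ys ! Suc k = a" "k < ?j"
          using walk_enter[OF wy jl _ ax] yj ab by blast
        then show False using ana by (metis jl Suc_lessI less_trans_Suc nth_mem order.strict_trans2 le_refl Suc_leI)
      qed
    qed
    then show ?thesis using a by simp
  next
    assume a: "x \<noteq> 1 \<and> x \<in> {1..n} \<and> a = p x"
    have hx: "h x = Suc (h a)" using p_prop(2) a by simp
    have "x \<in> A b"
    proof (rule ccontr)
      assume xb: "x \<notin> A b"
      have xx: "x \<in> A (?ys ! 0)" using A_self by simp
      have "?j \<noteq> 0" using xb yj xx by auto
      then obtain k where "?ys ! Suc k = p x" "k < ?j"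
        using walk_exit[OF wy jl _ xx] yj xb by blast
      then show False using ana a by (metis Suc_leI jl le_less_trans nth_mem)
    qed
    moreover have "a \<in> A b" using A_trans[OF bV \<open>x \<in> A b\<close>] A_p a A_self by auto
    ultimately show ?thesis using hx by simp
  qed
qed

lemma path_unique:
  assumes "is_path E xs a b" "is_path E ys a b" "a \<in> {1..n}" "b \<in> {1..n}"
  shows "xs = ys"
  using assms
proof (induction xs arbitrary: a ys)
  case Nil then show ?case by (simp add: is_path_def is_walk_def)
next
  case (Cons a' xs')
  have aa: "a' = a" using Cons.prems by (simp add: is_path_def)
  have ysne: "ys \<noteq> []" using Cons.prems(2) by (simp add: is_path_def is_walk_def)
  show ?case
  proof (cases xs')
    case Nil
    then have "a = b" using Cons.prems aa by (simp add: is_path_def)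
    then have "ys = [a]" using distinct_hd_last[of ys] Cons.prems(2) ysne by (auto simp: is_path_def)
    then show ?thesis using aa Nil by simp
  next
    case (Cons x rest)
    have "a \<noteq> b"
    proof
      assume "a = b"
      have "last (a' # xs') = a'" "distinct (a' # xs')" using Cons.prems(1) aa \<open>a = b\<close> by (auto simp: is_path_def)
      then show False using \<open>xs' = x # rest\<close> by (metis distinct.simps(2) last_ConsR last_in_set list.distinct(1))
    qed
    obtain y rest' where ysc: "ys = a # y # rest'"
    proof (cases ys)
      case Nil then show ?thesis using ysne by simp
    next
      case (Cons a'' zs)
      then have "a'' = a" using Cons.prems(2) by (simp add: is_path_def)
      show ?thesis
      proof (cases zs)
        case Nil then show ?thesis using Cons.prems(2) \<open>ys = a'' # zs\<close> \<open>a'' = a\<close> \<open>a \<noteq> b\<close> by (simp add: is_path_def)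
      next
        case (Cons y rest') then show ?thesis using that \<open>ys = a'' # zs\<close> \<open>a'' = a\<close> by simp
      qed
    qed
    have px: "(a \<in> A b \<longrightarrow> x \<in> A b \<and> h x = Suc (h a)) \<and> (a \<notin> A b \<longrightarrow> x = p a)"
      using path_next[of a x rest b] Cons.prems aa \<open>xs' = x # rest\<close> by (simp add: is_path_def)
    have py: "(a \<in> A b \<longrightarrow> y \<in> A b \<and> h y = Suc (h a)) \<and> (a \<notin> A b \<longrightarrow> y = p a)"
      using path_next[of a y rest' b] Cons.prems ysc by (simp add: is_path_def)
    have xy: "x = y"
    proof (cases "a \<in> A b")
      case True then show ?thesis using px py A_uniq[OF Cons.prems(4)] by auto
    next
      case False then show ?thesis using px py by auto
    qed
    have wx: "is_walk E (a # x # rest)" using Cons.prems(1) aa \<open>xs' = x # rest\<close> by (simp add: is_path_def)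
    then have xV: "x \<in> {1..n}" using E_V walk_Cons2 by blast
    have p1: "is_path E xs' x b" using Cons.prems(1) aa \<open>xs' = x # rest\<close> walk_Cons2 by (auto simp: is_path_def)
    have p2: "is_path E (y # rest') x b" using Cons.prems(2) ysc xy walk_Cons2 by (auto simp: is_path_def)
    have "xs' = y # rest'" using Cons.IH[OF p1 p2 xV Cons.prems(4)] .
    then show ?thesis using aa ysc by simp
  qed
qed

lemma path_verts_eq:
  assumes "is_path E xs a b" "a \<in> {1..n}" "b \<in> {1..n}"
  shows "path_verts E a b = set xs"
proof -
  have "(THE xs. is_path E xs a b) = xs"
    using assms path_unique by (intro the_equality) auto
  then show ?thesis unfolding path_verts_def by simp
qed

lemma path_exists:
  assumes "a \<in> {1..n}" "b \<in> {1..n}"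
  shows "\<exists>xs. is_path E xs a b"
  using path_ex[OF assms] unfolding is_path_def by blast

lemma deepest:
  assumes "a \<in> {1..n}" "b \<in> {1..n}"
  obtains m where "m \<in> A a \<inter> A b" "A a \<inter> A b = A m" "m \<in> {1..n}"
proof -
  let ?C = "A a \<inter> A b"
  have fin: "finite (h ` ?C)" using A_fin by simp
  have ne: "h ` ?C \<noteq> {}" using one_in_A assms by blast
  obtain m where m: "m \<in> ?C" "h m = Max (h ` ?C)" using Max_in[OF fin ne] by auto
  have mV: "m \<in> {1..n}" using A_V[OF assms(1)] m by auto
  have mx: "\<forall>z\<in>?C. h z \<le> h m" using m(2) fin by simp
  have "?C = A m"
  proof
    show "A m \<subseteq> ?C" using A_trans assms m(1) by blast
    show "?C \<subseteq> A m"
    proof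
      fix z assume z: "z \<in> ?C"
      obtain w where w: "w \<in> A m" "h w = h z" using A_ex[OF mV] mx z by blast
      have "w \<in> A a" using A_trans[OF assms(1)] m(1) w(1) by blast
      then have "w = z" using A_uniq[OF assms(1)] z w(2) by blast
      then show "z \<in> A m" using w by simp
    qed
  qed
  then show ?thesis using that m mV by blast
qed

lemma path_min:
  assumes "is_path E xs a b" "a \<in> {1..n}" "b \<in> {1..n}"
  shows "Min (h ` set xs) = card (A a \<inter> A b) - 1"
proof -
  obtain m where m: "m \<in> A a \<inter> A b" "A a \<inter> A b = A m" "m \<in> {1..n}" using deepest[OF assms(2,3)] .
  have w: "is_walk E xs" and d: "distinct xs" and hd: "hd xs = a" and la: "last xs = b"
    using assms(1) by (auto simp: is_path_def)
  have ne: "xs \<noteq> []" using w by (simp add: is_walk_def)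
  let ?j = "length xs - 1"
  have x0: "xs ! 0 = a" using hd ne by (simp add: hd_conv_nth)
  have xj: "xs ! ?j = b" using la ne by (simp add: last_conv_nth)
  have jl: "?j < length xs" using ne by simp
  have setV: "set xs \<subseteq> {1..n}" using walk_V[OF w] hd assms(2) by simp
  have mem: "m \<in> set xs"
  proof (cases "m = a")
    case True then show ?thesis using hd ne by auto
  next
    case False
    have lt: "h m < h a" using A_mem_h[OF assms(2)] m False by auto
    obtain c where c: "c \<in> A a" "h c = Suc (h m)" using A_ex[OF assms(2), of "Suc (h m)"] lt by auto
    have cV: "c \<in> {1..n}" using A_V[OF assms(2)] c by auto
    have c1: "c \<noteq> 1" using c h_one by auto
    have cb: "c \<notin> A b"
    proof
      assume "c \<in> A b"
      then have "c \<in> A m" using m c by auto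
      then show False using A_h(1)[OF m(3)] c by fastforce
    qed
    have "p c \<in> A a" using A_trans[OF assms(2) c(1)] A_p[OF cV c1] A_self[of "p c"] by auto
    moreover have "h (p c) = h m" using p_prop(2)[OF cV c1] c by simp
    ultimately have pc: "p c = m" using A_uniq[OF assms(2)] m by auto
    have "?j \<noteq> 0" using x0 xj c cb by auto
    then obtain k where "xs ! Suc k = p c" "k < ?j"
      using walk_exit[OF w jl _ ] x0 xj c cb by (metis neq0_conv)
    then show ?thesis using pc jl by (metis Suc_leI le_less_trans nth_mem)
  qed
  have all: "\<forall>v\<in>set xs. m \<in> A v"
  proof
    fix v assume "v \<in> set xs"
    then obtain j where j: "j < length xs" "xs ! j = v" by (auto simp: in_set_conv_nth)
    show "m \<in> A v"
    proof (rule ccontr)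
      assume nm: "m \<notin> A v"
      have "j \<noteq> 0" using nm x0 m(1) j by (cases j) auto
      then obtain k where k: "k < j" "xs ! k = m"
        using walk_exit[OF w j(1), of 0 m] x0 m(1) j nm by auto
      have "j \<noteq> ?j" using nm xj m(1) j by auto
      then have "j < ?j" using j by simp
      then obtain k' where k': "j \<le> k'" "k' < ?j" "xs ! Suc k' = m"
        using walk_enter[OF w jl, of j m] nm j m(1) xj by auto
      have "k = Suc k'" using nth_eq_iff_index_eq[OF d, of k "Suc k'"] k k' j jl by auto
      then show False using k k' by simp
    qed
  qed
  have "\<forall>v\<in>set xs. h m \<le> h v" using all setV A_h(1) by blast
  then have "Min (h ` set xs) = h m"
    using mem by (intro Min_eqI) auto
  then show ?thesis using m(2) card_A[OF m(3)] by simp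
qed

lemma dtp:
  assumes "a \<in> {1..n}" "b \<in> {1..n}"
  shows "dist_to_path E 1 a b = card (A a \<inter> A b) - 1"
proof -
  obtain xs where xs: "is_path E xs a b" using path_exists[OF assms] by blast
  have "dist_to_path E 1 a b = Min (h ` set xs)"
    unfolding dist_to_path_def path_verts_eq[OF xs assms] h_def by simp
  then show ?thesis using path_min[OF xs assms] by simp
qed

end

lemma ioc_Suc: "a \<le> N \<Longrightarrow> {a<..Suc N} = insert (Suc N) {a<..N}"
  by auto

lemma split_sum:
  fixes f :: "nat \<Rightarrow> nat \<Rightarrow> real"
  assumes sym: "\<And>u v. f u v = f v u"
  shows "(\<Sum>u\<in>{1..N}. \<Sum>v\<in>{1..N}. f u v) = (\<Sum>u\<in>{1..N}. f u u) + 2 * (\<Sum>a\<in>{1..N}. \<Sum>b\<in>{a<..N}. f a b)"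
proof (induction N)
  case 0 then show ?case by simp
next
  case (Suc N)
  have I: "{1..Suc N} = insert (Suc N) {1..N}" by auto
  have nI: "Suc N \<notin> {1..N}" by simp
  have L: "(\<Sum>u\<in>{1..Suc N}. \<Sum>v\<in>{1..Suc N}. f u v)
     = (\<Sum>u\<in>{1..N}. \<Sum>v\<in>{1..N}. f u v) + (\<Sum>u\<in>{1..N}. f u (Suc N)) + (\<Sum>v\<in>{1..N}. f (Suc N) v) + f (Suc N) (Suc N)"
    unfolding I by (simp add: sum.insert[OF _ nI] sum.distrib)
  have R2: "(\<Sum>a\<in>{1..Suc N}. \<Sum>b\<in>{a<..Suc N}. f a b) = (\<Sum>a\<in>{1..N}. \<Sum>b\<in>{a<..N}. f a b) + (\<Sum>a\<in>{1..N}. f a (Suc N))"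
  proof -
    have "(\<Sum>a\<in>{1..Suc N}. \<Sum>b\<in>{a<..Suc N}. f a b) = (\<Sum>a\<in>{1..N}. \<Sum>b\<in>{a<..Suc N}. f a b)"
      unfolding I by (simp add: sum.insert[OF _ nI])
    also have "\<dots> = (\<Sum>a\<in>{1..N}. f a (Suc N) + (\<Sum>b\<in>{a<..N}. f a b))"
      by (intro sum.cong refl) (simp add: ioc_Suc)
    finally show ?thesis by (simp add: sum.distrib)
  qed
  have R1: "(\<Sum>u\<in>{1..Suc N}. f u u) = (\<Sum>u\<in>{1..N}. f u u) + f (Suc N) (Suc N)"
    unfolding I by (simp add: sum.insert[OF _ nI])
  have sw: "(\<Sum>v\<in>{1..N}. f (Suc N) v) = (\<Sum>u\<in>{1..N}. f u (Suc N))" using sym by simp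
  show ?case unfolding L R1 R2 Suc.IH sw by simp
qed

lemma choose3: "real (N choose 3) * 6 = real N * (real N - 1) * (real N - 2)"
proof (induction N)
  case 0 then show ?case by simp
next
  case (Suc N)
  have "Suc N choose 3 = (N choose 2) + (N choose 3)" by (simp add: numeral_3_eq_3 numeral_2_eq_2)
  moreover have "real (N choose 2) * 2 = real N * (real N - 1)"
  proof (cases N)
    case 0 then show ?thesis by simp
  next
    case (Suc M)
    then have "N choose 2 = N * M div 2" by (simp add: choose_two)
    moreover have "even (N * M)" using Suc by simp
    ultimately have "2 * (N choose 2) = N * M" by simp
    then have "real (2 * (N choose 2)) = real (N * M)" by simp
    then show ?thesis using Suc by (simp add: algebra_simps)
  qed
  ultimately show ?case using Suc.IH by (simp add: algebra_simps)
qed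

context tr
begin

definition g :: "nat \<Rightarrow> nat \<Rightarrow> nat" where "g a b = card (A a \<inter> A b) - 1"

lemma g_sym: "g a b = g b a" unfolding g_def by (simp add: Int_commute)

lemma card_inter_pos: assumes "a \<in> {1..n}" "b \<in> {1..n}" shows "card (A a \<inter> A b) \<ge> 1"
proof -
  have "1 \<in> A a \<inter> A b" using one_in_A assms by auto
  then show ?thesis using A_fin by (metis One_nat_def Suc_leI card_gt_0_iff empty_iff finite_Int)
qed

lemma gdist_g:
  assumes "u \<in> {1..n}" "v \<in> {1..n}"
  shows "real (gdist E u v) = real (h u) + real (h v) - 2 * real (g u v)"
proof -
  have "card (sdiff (A u) (A v)) + 2 * card (A u \<inter> A v) = Suc (h u) + Suc (h v)"
    using card_sdiff_eq[OF A_fin A_fin] card_A assms by simp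
  then show ?thesis using gdist_A[OF assms] card_inter_pos[OF assms] unfolding g_def
    by (simp add: of_nat_diff)
qed

lemma g_diag: assumes "u \<in> {1..n}" shows "g u u = h u"
  using card_A[OF assms] unfolding g_def by simp

lemma g_one: assumes "u \<in> {1..n}" shows "g u 1 = 0"
  unfolding g_def A_one using one_in_A[OF assms] by (simp add: Int_absorb1)

lemma gdist_1: assumes "u \<in> {1..n}" shows "real (gdist E u 1) = real (h u)"
  using gdist_g[OF assms one_V] g_one[OF assms] h_one by simp

lemma R_eq: "R_index n E = 4 * (\<Sum>a\<in>{1..n}. \<Sum>b\<in>{a<..n}. real (g a b))"
proof -
  let ?V = "{1..n}"
  let ?H = "\<Sum>u\<in>?V. real (h u)"
  let ?Q = "\<Sum>a\<in>{1..n}. \<Sum>b\<in>{a<..n}. real (g a b)"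
  have s1: "(\<Sum>u\<in>?V. real (gdist E u 1)) = ?H" using gdist_1 by simp
  have "(\<Sum>u\<in>?V. \<Sum>v\<in>?V. real (gdist E u v)) = (\<Sum>u\<in>?V. \<Sum>v\<in>?V. real (h u) + real (h v) - 2 * real (g u v))"
    using gdist_g by simp
  also have "\<dots> = (\<Sum>u\<in>?V. real n * real (h u) + ?H - 2 * (\<Sum>v\<in>?V. real (g u v)))"
    by (simp add: sum.distrib sum_subtractf sum_distrib_left)
  also have "\<dots> = real n * ?H + real n * ?H - 2 * (\<Sum>u\<in>?V. \<Sum>v\<in>?V. real (g u v))"
    by (simp add: sum.distrib sum_subtractf sum_distrib_left)
  also have "(\<Sum>u\<in>?V. \<Sum>v\<in>?V. real (g u v)) = ?H + 2 * ?Q"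
    using split_sum[of "\<lambda>u v. real (g u v)" n] g_sym g_diag by simp
  finally have s2: "(\<Sum>u\<in>?V. \<Sum>v\<in>?V. real (gdist E u v)) = 2 * real n * ?H - 2 * ?H - 4 * ?Q" by simp
  show ?thesis unfolding R_index_def s1 s2 by (simp add: algebra_simps)
qed

lemma dtp_sum: "(\<Sum>a\<in>{1..n}. \<Sum>b\<in>{a<..n}. real (dist_to_path E 1 a b)) = (\<Sum>a\<in>{1..n}. \<Sum>b\<in>{a<..n}. real (g a b))"
proof (intro sum.cong refl)
  fix a b assume "a \<in> {1..n}" "b \<in> {a<..n}"
  then have "a \<in> {1..n}" "b \<in> {1..n}" by auto
  then show "real (dist_to_path E 1 a b) = real (g a b)" using dtp[of a b] unfolding g_def by simp
qed

lemma Q_nonneg: "0 \<le> (\<Sum>a\<in>{1..n}. \<Sum>b\<in>{a<..n}. real (g a b))"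
  by (intro sum_nonneg) auto

lemma inter_one:
  assumes "a \<in> {1..n}" "b \<in> {1..n}" "g a b = 0"
  shows "A a \<inter> A b = {1}"
proof -
  have "card (A a \<inter> A b) = 1" using card_inter_pos[OF assms(1,2)] assms(3) unfolding g_def by simp
  then show ?thesis using one_in_A assms by (metis IntI card_1_singletonE singletonD)
qed

lemma star_iff: "(\<Sum>a\<in>{1..n}. \<Sum>b\<in>{a<..n}. real (g a b)) = 0 \<longleftrightarrow> is_star_centre1 n E"
proof
  assume "(\<Sum>a\<in>{1..n}. \<Sum>b\<in>{a<..n}. real (g a b)) = 0"
  then have "\<forall>a\<in>{1..n}. (\<Sum>b\<in>{a<..n}. real (g a b)) = 0"
    by (subst (asm) sum_nonneg_eq_0_iff) (auto intro: sum_nonneg)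
  then have z: "\<forall>a\<in>{1..n}. \<forall>b\<in>{a<..n}. g a b = 0"
    by (auto simp: sum_nonneg_eq_0_iff)
  have z2: "A a \<inter> A b = {1}" if "a \<in> {1..n}" "b \<in> {1..n}" "a \<noteq> b" for a b
  proof (cases "a < b")
    case True then show ?thesis using z that inter_one by auto
  next
    case False then have "b < a" using that by simp
    then show ?thesis using z that inter_one g_sym by (metis Int_commute greaterThanAtMost_iff atLeastAtMost_iff)
  qed
  have p1: "p v = 1" if "v \<in> {1..n}" "v \<noteq> 1" for v
  proof -
    have "p v \<in> A v" using A_p that A_self by auto
    moreover have "p v \<in> A (p v)" by (rule A_self)
    moreover have "p v \<noteq> v" using p_notin that A_self by metis
    ultimately show ?thesis using z2[OF that(1) p_V[OF that]] by auto
  qed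
  show "is_star_centre1 n E" unfolding is_star_centre1_def
  proof (intro allI iffI)
    fix u v assume "E u v"
    then show "(u = 1 \<and> v \<in> {1..n} - {1}) \<or> (v = 1 \<and> u \<in> {1..n} - {1})"
      using edge_char p1 by auto
  next
    fix u v assume "(u = 1 \<and> v \<in> {1..n} - {1}) \<or> (v = 1 \<and> u \<in> {1..n} - {1})"
    then show "E u v" using p_prop(1) p1 E_sym by (metis DiffE singletonI)
  qed
next
  assume st: "is_star_centre1 n E"
  have p1: "p v = 1" if "v \<in> {1..n}" "v \<noteq> 1" for v
    using p_prop(1)[OF that] st that unfolding is_star_centre1_def by blast
  have Av: "A v \<subseteq> {v, 1}" if "v \<in> {1..n}" for v
  proof (cases "v = 1")
    case True then show ?thesis by (simp only: True A_one) simp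
  next
    case False then show ?thesis using A_p[OF that False] p1[OF that False] A_one by auto
  qed
  have "g a b = 0" if "a \<in> {1..n}" "b \<in> {a<..n}" for a b
  proof -
    have bV: "b \<in> {1..n}" using that by auto
    have "A a \<inter> A b \<subseteq> {1}" using Av[OF that(1)] Av[OF bV] that by auto
    then have "card (A a \<inter> A b) \<le> 1" by (metis card.empty card_insert_disjoint card_mono empty_iff finite.intros(1) finite_insert le_zero_eq One_nat_def)
    then show ?thesis unfolding g_def by simp
  qed
  then show "(\<Sum>a\<in>{1..n}. \<Sum>b\<in>{a<..n}. real (g a b)) = 0" by simp
qed

end

context tr
begin

definition W :: "nat \<Rightarrow> nat \<Rightarrow> nat set" where
  "W a b = {w. w \<in> A a \<inter> A b \<and> (\<exists>z\<in>A a \<inter> A b. h w < h z)}"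

definition S :: "(nat \<times> nat \<times> nat) set" where
  "S = Sigma {1..n} (\<lambda>a. Sigma {a<..n} (\<lambda>b. W a b))"

definition T3 :: "nat set set" where
  "T3 = {X. X \<subseteq> {1..n} \<and> card X = 3}"

definition f3 :: "nat \<times> nat \<times> nat \<Rightarrow> nat set" where
  "f3 x = (case x of (a, b, w) \<Rightarrow> {a, b, w})"

lemma W_fin: "finite (W a b)"
  by (rule finite_subset[of _ "A a"]) (auto simp: W_def A_fin)

lemma card_W:
  assumes "a \<in> {1..n}" "b \<in> {1..n}"
  shows "card (W a b) = g a b"
proof -
  obtain m where m: "m \<in> A a \<inter> A b" "A a \<inter> A b = A m" "m \<in> {1..n}" using deepest[OF assms] .
  have "W a b = A m - {m}"
  proof
    show "W a b \<subseteq> A m - {m}"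
    proof
      fix w assume "w \<in> W a b"
      then obtain z where "w \<in> A m" "z \<in> A m" "h w < h z" unfolding W_def m(2) by auto
      then show "w \<in> A m - {m}" using A_h(1)[OF m(3)] by fastforce
    qed
    show "A m - {m} \<subseteq> W a b"
      unfolding W_def m(2) using A_mem_h[OF m(3)] A_self[of m] by blast
  qed
  then show ?thesis unfolding g_def m(2) using A_self[of m] A_fin by (simp add: card_Diff_singleton)
qed

lemma card_S: "card S = (\<Sum>a\<in>{1..n}. \<Sum>b\<in>{a<..n}. g a b)"
  unfolding S_def
proof (subst card_SigmaI)
  show "finite {1..n}" by simp
  show "\<forall>a\<in>{1..n}. finite (Sigma {a<..n} (W a))" using W_fin by auto
  show "(\<Sum>a\<in>{1..n}. card (Sigma {a<..n} (W a))) = (\<Sum>a\<in>{1..n}. \<Sum>b\<in>{a<..n}. g a b)"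
  proof (intro sum.cong refl)
    fix a assume a: "a \<in> {1..n}"
    have "card (Sigma {a<..n} (W a)) = (\<Sum>b\<in>{a<..n}. card (W a b))"
      using W_fin by (simp add: card_SigmaI)
    also have "\<dots> = (\<Sum>b\<in>{a<..n}. g a b)" using card_W a by (intro sum.cong refl) auto
    finally show "card (Sigma {a<..n} (W a)) = (\<Sum>b\<in>{a<..n}. g a b)" .
  qed
qed

lemma valid:
  assumes "(a, b, w) \<in> S"
  shows "a \<in> {1..n}" "b \<in> {1..n}" "a < b" "w \<in> A a" "w \<in> A b" "w \<noteq> a" "w \<noteq> b"
    "a \<notin> A w" "b \<notin> A w" "w \<in> {1..n}"
proof -
  have ab: "a \<in> {1..n}" "b \<in> {1..n}" "a < b" using assms unfolding S_def by auto
  then show "a \<in> {1..n}" "b \<in> {1..n}" "a < b" by auto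
  obtain z where z: "w \<in> A a" "w \<in> A b" "z \<in> A a" "z \<in> A b" "h w < h z"
    using assms unfolding S_def W_def by auto
  show "w \<in> A a" "w \<in> A b" using z by auto
  have wV: "w \<in> {1..n}" using A_V[OF ab(1)] z by auto
  then show "w \<in> {1..n}" .
  have "h z \<le> h a" "h z \<le> h b" using A_h(1) ab z by auto
  then have "h w < h a" "h w < h b" using z by auto
  then show "w \<noteq> a" "w \<noteq> b" "a \<notin> A w" "b \<notin> A w" using A_h(1)[OF wV] by fastforce+
qed

lemma f3_inj: "inj_on f3 S"
proof (rule inj_onI)
  fix x y assume x: "x \<in> S" and y: "y \<in> S" and eq: "f3 x = f3 y"
  obtain a b w where xd: "x = (a, b, w)" by (cases x) auto
  obtain a' b' w' where yd: "y = (a', b', w')" by (cases y) auto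
  note vx = valid[OF x[unfolded xd]]
  note vy = valid[OF y[unfolded yd]]
  have X: "{a, b, w} = {a', b', w'}" using eq xd yd by (simp add: f3_def)
  have ww: "w' = w"
  proof (rule ccontr)
    assume ne: "w' \<noteq> w"
    have "w' \<in> {a, b}" using X ne by auto
    moreover have "w \<in> {a', b'}" using X ne by auto
    then have "w' \<in> A w" using vy by auto
    ultimately show False using vx by auto
  qed
  have "{a, b} = {a', b'}" using X ww vx vy by auto
  then have "a = a' \<and> b = b'" using vx(3) vy(3) by (auto simp: doubleton_eq_iff)
  then show "x = y" using xd yd ww by simp
qed

lemma f3_sub: "f3 ` S \<subseteq> T3"
proof
  fix X assume "X \<in> f3 ` S"
  then obtain a b w where x: "(a, b, w) \<in> S" "X = {a, b, w}" unfolding f3_def by auto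
  note v = valid[OF x(1)]
  have "card X = 3" using x(2) v by (auto simp: card_insert_if)
  then show "X \<in> T3" unfolding T3_def using x(2) v by auto
qed

lemma card_T3: "card T3 = n choose 3"
  unfolding T3_def using n_subsets[of "{1..n}" 3] by simp

lemma fin_T3: "finite T3" unfolding T3_def by simp

lemma fin_S: "finite S" unfolding S_def using W_fin by auto

lemma anc_chain:
  assumes inj: "inj_on h {1..n}" and "u \<in> {1..n}" "v \<in> {1..n}" "h u \<le> h v"
  shows "u \<in> A v"
proof -
  obtain w where w: "w \<in> A v" "h w = h u" using A_ex[OF assms(3,4)] by blast
  have "w \<in> {1..n}" using A_V[OF assms(3)] w by auto
  then have "w = u" using inj w(2) assms(2) by (simp add: inj_on_eq_iff)
  then show ?thesis using w by simp
qed

lemma helper3: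
  assumes inj: "inj_on h {1..n}" and V: "x \<in> {1..n}" "y \<in> {1..n}" "z \<in> {1..n}"
    and d: "y \<noteq> z" and lt: "h x < h y" "h x < h z"
  shows "{x, y, z} \<in> f3 ` S"
proof -
  have xy: "x \<in> A y" and xz: "x \<in> A z" using anc_chain[OF inj] V lt by auto
  have "\<exists>z0\<in>A y \<inter> A z. h x < h z0"
  proof (cases "h y \<le> h z")
    case True then have "y \<in> A z" using anc_chain[OF inj] V by auto
    then show ?thesis using A_self[of y] lt by auto
  next
    case False then have "z \<in> A y" using anc_chain[OF inj] V by auto
    then show ?thesis using A_self[of z] lt by auto
  qed
  then have Wm: "x \<in> W (min y z) (max y z)" unfolding W_def using xy xz by (auto simp: min_def max_def Int_commute)
  have "(min y z, max y z, x) \<in> S" unfolding S_def using Wm V d by (auto simp: min_def max_def)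
  moreover have "f3 (min y z, max y z, x) = {x, y, z}" by (auto simp: f3_def min_def max_def)
  ultimately show ?thesis by (metis image_eqI)
qed

lemma chain_surj:
  assumes inj: "inj_on h {1..n}"
  shows "f3 ` S = T3"
proof
  show "f3 ` S \<subseteq> T3" by (rule f3_sub)
  show "T3 \<subseteq> f3 ` S"
  proof
    fix X assume "X \<in> T3"
    then have X: "X \<subseteq> {1..n}" "card X = 3" unfolding T3_def by auto
    then obtain x y z where xyz: "X = {x, y, z}" "x \<noteq> y" "y \<noteq> z" "x \<noteq> z" by (auto simp: card_3_iff)
    have V: "x \<in> {1..n}" "y \<in> {1..n}" "z \<in> {1..n}" using X xyz by auto
    have hd: "h x \<noteq> h y" "h y \<noteq> h z" "h x \<noteq> h z" using inj V xyz by (auto simp: inj_on_eq_iff)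
    show "X \<in> f3 ` S"
    proof (cases "h x < h y \<and> h x < h z")
      case True then show ?thesis using helper3[OF inj V(1,2,3)] xyz by auto
    next
      case F1: False
      show ?thesis
      proof (cases "h y < h x \<and> h y < h z")
        case True
        then have "{y, x, z} \<in> f3 ` S" using helper3[OF inj V(2,1,3)] xyz by auto
        moreover have "{y, x, z} = X" using xyz by auto
        ultimately show ?thesis by simp
      next
        case False
        then have "h z < h x \<and> h z < h y" using F1 hd by auto
        then have "{z, x, y} \<in> f3 ` S" using helper3[OF inj V(3,1,2)] xyz by auto
        moreover have "{z, x, y} = X" using xyz by auto
        ultimately show ?thesis by simp
      qed
    qed
  qed
qed

lemma surj_chain:
  assumes su: "f3 ` S = T3"
  shows "inj_on h {1..n}"
proof (rule inj_onI, rule ccontr)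
  fix u v assume u: "u \<in> {1..n}" and v: "v \<in> {1..n}" and huv: "h u = h v" and ne: "u \<noteq> v"
  obtain m where m: "m \<in> A u \<inter> A v" "A u \<inter> A v = A m" "m \<in> {1..n}" using deepest[OF u v] .
  have mu: "m \<noteq> u" using m(1) A_h(2)[OF v] huv ne by auto
  have mv: "m \<noteq> v" using m(1) A_h(2)[OF u] huv ne by auto
  have "{u, v, m} \<in> T3" unfolding T3_def using u v m(3) mu mv ne by (auto simp: card_insert_if)
  then have "{u, v, m} \<in> f3 ` S" using su by simp
  then obtain x where x: "x \<in> S" "{u, v, m} = f3 x" by auto
  obtain a b w where xd: "x = (a, b, w)" by (cases x) auto
  have s: "(a, b, w) \<in> S" "{a, b, w} = {u, v, m}" using x xd by (auto simp: f3_def)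
  note vl = valid[OF s(1)]
  obtain z where z: "z \<in> A a \<inter> A b" "h w < h z" using s(1) unfolding S_def W_def by auto
  have "w = u \<or> w = v \<or> w = m" using s(2) by auto
  then show False
  proof (elim disjE)
    assume wu: "w = u"
    then have "m \<in> {a, b}" using s(2) mu by auto
    then have "u \<in> A m" using vl wu by auto
    then show False using A_h(1)[OF m(3)] A_mem_h[OF u] m(1) mu by fastforce
  next
    assume wv: "w = v"
    then have "m \<in> {a, b}" using s(2) mv by auto
    then have "v \<in> A m" using vl wv by auto
    then show False using A_h(1)[OF m(3)] A_mem_h[OF v] m(1) mv by fastforce
  next
    assume wm: "w = m"
    then have "{a, b} = {u, v}" using s(2) vl ne mu mv by auto
    then have "A a \<inter> A b = A m" using m(2) by (auto simp: doubleton_eq_iff Int_commute)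
    then show False using z wm A_h(1)[OF m(3)] by fastforce
  qed
qed

lemma h_lt_n: assumes "v \<in> {1..n}" shows "h v < n"
proof -
  have "card (A v) \<le> card {1..n}" using A_V[OF assms] by (intro card_mono) auto
  then show ?thesis using card_A[OF assms] by simp
qed

lemma chain_path:
  assumes inj: "inj_on h {1..n}"
  shows "is_path_graph_end1 n E"
proof -
  have sub: "h ` {1..n} \<subseteq> {0..<n}" using h_lt_n by auto
  have "card (h ` {1..n}) = card {0..<n}" using card_image[OF inj] by simp
  then have img: "h ` {1..n} = {0..<n}" using card_subset_eq[OF _ sub] by simp
  have bij: "bij_betw h {1..n} {0..<n}" using inj img by (simp add: bij_betw_def)
  define gi where "gi = inv_into {1..n} h"
  have bij2: "bij_betw gi {0..<n} {1..n}" unfolding gi_def using bij_betw_inv_into[OF bij] .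
  have gh: "gi (h x) = x" if "x \<in> {1..n}" for x unfolding gi_def using inv_into_f_f[OF inj that] .
  have hg: "h (gi i) = i" if "i < n" for i unfolding gi_def using f_inv_into_f[of i h "{1..n}"] img that by auto
  have gV: "gi i \<in> {1..n}" if "i < n" for i using bij2 that by (auto simp: bij_betw_def)
  define xs where "xs = map gi [0..<n]"
  have len: "length xs = n" unfolding xs_def by simp
  have nth: "xs ! i = gi i" if "i < n" for i unfolding xs_def using that by simp
  have "distinct xs" unfolding xs_def using bij2 by (simp add: distinct_map bij_betw_def)
  moreover have "set xs = {1..n}" unfolding xs_def using bij2 by (simp add: bij_betw_def)
  moreover have "hd xs = 1"
  proof -
    have "hd xs = gi 0" unfolding xs_def using n_ge1 by (simp add: hd_map upt_rec)
    also have "\<dots> = 1" using gh[OF one_V] h_one by simp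
    finally show ?thesis .
  qed
  moreover have "\<forall>u v. E u v \<longleftrightarrow> (\<exists>i. Suc i < length xs \<and>
         ((u = xs ! i \<and> v = xs ! Suc i) \<or> (v = xs ! i \<and> u = xs ! Suc i)))"
  proof (intro allI iffI)
    fix u v assume e: "E u v"
    show "\<exists>i. Suc i < length xs \<and> ((u = xs ! i \<and> v = xs ! Suc i) \<or> (v = xs ! i \<and> u = xs ! Suc i))"
      using edge_char[OF e]
    proof
      assume a: "u \<noteq> 1 \<and> u \<in> {1..n} \<and> v = p u"
      then have hu: "h u = Suc (h v)" using p_prop(2) by auto
      have "h u < n" using h_lt_n a by auto
      moreover have "xs ! h u = u" using nth[OF \<open>h u < n\<close>] gh[of u] a by simp
      moreover have vV: "v \<in> {1..n}" using p_V a by auto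
      moreover have "xs ! h v = v" using nth[OF h_lt_n[OF vV]] gh[OF vV] by simp
      ultimately have "u = xs ! Suc (h v)" "v = xs ! h v" using hu by auto
      then show ?thesis using hu len \<open>h u < n\<close> by (intro exI[of _ "h v"]) auto
    next
      assume a: "v \<noteq> 1 \<and> v \<in> {1..n} \<and> u = p v"
      then have hv: "h v = Suc (h u)" using p_prop(2) by auto
      have "h v < n" using h_lt_n a by auto
      moreover have "xs ! h v = v" using nth[OF \<open>h v < n\<close>] gh[of v] a by simp
      moreover have uV: "u \<in> {1..n}" using p_V a by auto
      moreover have "xs ! h u = u" using nth[OF h_lt_n[OF uV]] gh[OF uV] by simp
      ultimately have "v = xs ! Suc (h u)" "u = xs ! h u" using hv by auto
      then show ?thesis using hv len \<open>h v < n\<close> by (intro exI[of _ "h u"]) auto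
    qed
  next
    fix u v assume "\<exists>i. Suc i < length xs \<and> ((u = xs ! i \<and> v = xs ! Suc i) \<or> (v = xs ! i \<and> u = xs ! Suc i))"
    then obtain i where i: "Suc i < n" "(u = gi i \<and> v = gi (Suc i)) \<or> (v = gi i \<and> u = gi (Suc i))"
      using len nth by auto
    have e: "E (gi (Suc i)) (gi i)"
    proof -
      let ?y = "gi (Suc i)"
      have yV: "?y \<in> {1..n}" using gV i by simp
      have hy: "h ?y = Suc i" using hg i by simp
      have y1: "?y \<noteq> 1" using hy h_one by auto
      have "h (p ?y) = i" using p_prop(2)[OF yV y1] hy by simp
      then have "p ?y = gi i" using gh[OF p_V[OF yV y1]] by simp
      then show ?thesis using p_prop(1)[OF yV y1] by simp
    qed
    then show "E u v" using i(2) E_sym by auto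
  qed
  ultimately show ?thesis unfolding is_path_graph_end1_def by blast
qed

lemma path_chain:
  assumes "is_path_graph_end1 n E"
  shows "inj_on h {1..n}"
proof -
  obtain xs where xs: "distinct xs" "set xs = {1..n}" "hd xs = 1"
    and ch: "\<forall>u v. E u v \<longleftrightarrow> (\<exists>i. Suc i < length xs \<and>
         ((u = xs ! i \<and> v = xs ! Suc i) \<or> (v = xs ! i \<and> u = xs ! Suc i)))"
    using assms unfolding is_path_graph_end1_def by blast
  have len: "length xs = n" using distinct_card[OF xs(1)] xs(2) by simp
  have "xs \<noteq> []" using len n_ge1 by auto
  then have x0: "xs ! 0 = 1" using xs(3) hd_conv_nth[of xs] by simp
  have xV: "xs ! i \<in> {1..n}" if "i < n" for i using xs(2) len that nth_mem by blast
  have edge: "E (xs ! j) (xs ! Suc j)" if "Suc j < n" for j using ch len that by blast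
  have hx: "i < n \<Longrightarrow> h (xs ! i) = i" for i
  proof (induction i rule: less_induct)
    case (less i)
    show ?case
    proof (cases i)
      case 0 then show ?thesis using x0 h_one by simp
    next
      case (Suc j)
      have IHj: "h (xs ! j) = j" using less Suc by simp
      have e: "E (xs ! j) (xs ! Suc j)" using edge less Suc by simp
      show ?thesis using edge_char[OF e]
      proof
        assume a: "xs ! Suc j \<noteq> 1 \<and> xs ! Suc j \<in> {1..n} \<and> xs ! j = p (xs ! Suc j)"
        then show ?thesis using p_prop(2)[of "xs ! Suc j"] IHj Suc by simp
      next
        assume a: "xs ! j \<noteq> 1 \<and> xs ! j \<in> {1..n} \<and> xs ! Suc j = p (xs ! j)"
        then have hj: "h (xs ! j) = Suc (h (xs ! Suc j))" using p_prop(2) by simp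
        then obtain k where k: "j = Suc k" using IHj by (cases j) auto
        have IHk: "h (xs ! k) = k" using less Suc k by simp
        have e2: "E (xs ! k) (xs ! j)" using edge less Suc k by simp
        show ?thesis using edge_char[OF e2]
        proof
          assume b: "xs ! k \<noteq> 1 \<and> xs ! k \<in> {1..n} \<and> xs ! j = p (xs ! k)"
          then show ?thesis using p_prop(2)[of "xs ! k"] IHk IHj k by simp
        next
          assume b: "xs ! j \<noteq> 1 \<and> xs ! j \<in> {1..n} \<and> xs ! k = p (xs ! j)"
          then have "xs ! k = xs ! Suc j" using a by simp
          then have "k = Suc j" using nth_eq_iff_index_eq[OF xs(1)] len less Suc k by simp
          then show ?thesis using k by simp
        qed
      qed
    qed
  qed
  show ?thesis
  proof (rule inj_onI)
    fix u v assume u: "u \<in> {1..n}" and v: "v \<in> {1..n}" and huv: "h u = h v"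
    obtain i where i: "i < n" "u = xs ! i" using u xs(2) len by (metis in_set_conv_nth)
    obtain j where j: "j < n" "v = xs ! j" using v xs(2) len by (metis in_set_conv_nth)
    have "i = j" using hx i j huv by simp
    then show "u = v" using i j by simp
  qed
qed

end

theorem proposition2p8:
  fixes n :: nat and E :: "nat \<Rightarrow> nat \<Rightarrow> bool"
  assumes "is_tree n E"
  shows "R_index n E = 4 * (\<Sum>a\<in>{1..n}. \<Sum>b\<in>{a<..n}. real (dist_to_path E 1 a b))
      \<and> 0 \<le> R_index n E
      \<and> R_index n E \<le> 2 / 3 * real n * (real n - 1) * (real n - 2)
      \<and> (R_index n E = 2 / 3 * real n * (real n - 1) * (real n - 2) \<longleftrightarrow> is_path_graph_end1 n E)
      \<and> (R_index n E = 0 \<longleftrightarrow> is_star_centre1 n E)"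
proof -
  interpret tr n E using assms by (rule tr.intro)
  let ?Q = "\<Sum>a\<in>{1..n}. \<Sum>b\<in>{a<..n}. real (g a b)"
  have R: "R_index n E = 4 * ?Q" by (rule R_eq)
  have Qc: "?Q = real (card S)" unfolding card_S by simp
  have bnd: "2 / 3 * real n * (real n - 1) * (real n - 2) = 4 * real (n choose 3)"
    using choose3[of n] by simp
  have cS: "card (f3 ` S) = card S" using card_image[OF f3_inj] .
  have le: "card S \<le> n choose 3" using card_mono[OF fin_T3 f3_sub] cS card_T3 by simp
  have eqv: "card S = n choose 3 \<longleftrightarrow> f3 ` S = T3"
  proof
    assume "card S = n choose 3"
    then show "f3 ` S = T3" using card_subset_eq[OF fin_T3 f3_sub] cS card_T3 by simp
  next
    assume "f3 ` S = T3"
    then show "card S = n choose 3" using cS card_T3 by simp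
  qed
  have "R_index n E = 2 / 3 * real n * (real n - 1) * (real n - 2) \<longleftrightarrow> card S = n choose 3"
    unfolding R Qc bnd by simp
  also have "\<dots> \<longleftrightarrow> is_path_graph_end1 n E"
    using eqv chain_surj surj_chain chain_path path_chain by blast
  finally have P: "R_index n E = 2 / 3 * real n * (real n - 1) * (real n - 2) \<longleftrightarrow> is_path_graph_end1 n E" .
  have St: "R_index n E = 0 \<longleftrightarrow> is_star_centre1 n E" unfolding R using star_iff by simp
  show ?thesis using R dtp_sum Q_nonneg P St le unfolding bnd Qc by simp
qed

end
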